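(* Let $(X,d)$ be a compact metric space and $(X_k)_k$ a sequence of subsets of $X$, with $d_k$ the restriction of $d$ to $X_k\times X_k$. Assume there is $C>0$ such that $(X_k,d_k)$ is $C$-quasiconvex for every $k$, and $\lim_{k\to\infty}d_H(X_k,X)=0$. Then $(X,d)$ is $C$-quasiconvex.
   Context: A metric space $(Y,\delta)$ is $C$-quasiconvex if $\delta_I\le C\delta$, where $\delta_I(x,y)$ is the infimum of the lengths of continuous curves in $Y$ from $x$ to $y$ (length $=\sup\sum_i\delta(\gamma(t_i),\gamma(t_{i+1}))$ over partitions). The Hausdorff–Pompeiu distance is $d_H(A,B)=\max\{\sup_{x\in A}d(x,B),\sup_{y\in B}d(y,A)\}$ with $d(x,C)=\inf_{z\in C}d(x,z)$. *)

theory Defs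
  imports "HOL-Analysis.Analysis"
begin

definition curve_length :: "(real \<Rightarrow> 'a::metric_space) \<Rightarrow> ennreal" where
  "curve_length \<gamma> =
     (SUP (n, t) \<in> {(n, t). t 0 = 0 \<and> t n = 1 \<and> (\<forall>i<n. t i \<le> t (Suc i))}.
        ennreal (\<Sum>i<n. dist (\<gamma> (t i)) (\<gamma> (t (Suc i)))))"

text \<open>Intrinsic distance in Y: infimum of lengths of continuous curves in Y from x to y
  (\<infinity> if there is no such curve).\<close>
definition intrinsic_dist :: "'a::metric_space set \<Rightarrow> 'a \<Rightarrow> 'a \<Rightarrow> ennreal" where
  "intrinsic_dist Y x y =
     (INF \<gamma> \<in> {\<gamma>. path \<gamma> \<and> path_image \<gamma> \<subseteq> Y \<and> pathstart \<gamma> = x \<and> pathfinish \<gamma> = y}.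
        curve_length \<gamma>)"

definition quasiconvex :: "real \<Rightarrow> 'a::metric_space set \<Rightarrow> bool" where
  "quasiconvex C Y \<longleftrightarrow> (\<forall>x\<in>Y. \<forall>y\<in>Y. intrinsic_dist Y x y \<le> ennreal (C * dist x y))"

text \<open>Distance from a point to a set and Hausdorff--Pompeiu distance, valued in [0,\<infinity>]
  (inf of the empty set is \<infinity>).\<close>
definition pt_set_dist :: "'a::metric_space \<Rightarrow> 'a set \<Rightarrow> ennreal" where
  "pt_set_dist x C = (INF z \<in> C. ennreal (dist x z))"

definition hausdorff_dist :: "'a::metric_space set \<Rightarrow> 'a set \<Rightarrow> ennreal" where
  "hausdorff_dist A B = max (SUP x \<in> A. pt_set_dist x B) (SUP y \<in> B. pt_set_dist y A)"

end

theory Submission imports Defs begin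

lemma curve_length_ge:
  fixes \<gamma> :: "real \<Rightarrow> 'a::metric_space"
  assumes "t 0 = 0" "t n = 1" "\<And>i. i < n \<Longrightarrow> t i \<le> t (Suc i)"
  shows "ennreal (\<Sum>i<n. dist (\<gamma> (t i)) (\<gamma> (t (Suc i)))) \<le> curve_length \<gamma>"
  unfolding curve_length_def
  by (rule SUP_upper2[where i="(n,t)"]) (use assms in auto)

lemma discretize:
  fixes \<gamma> :: "real \<Rightarrow> 'a::metric_space"
  assumes "path \<gamma>" "curve_length \<gamma> \<le> ennreal l" "\<delta> > 0" "l \<ge> 0"
  shows "\<exists>g. (\<forall>s\<in>{0..1}. g s \<in> path_image \<gamma>) \<and> g 0 = \<gamma> 0 \<and> g 1 = \<gamma> 1 \<and>
     (\<forall>s\<in>{0..1}. \<forall>t\<in>{0..1}. dist (g s) (g t) \<le> l * \<bar>t - s\<bar> + \<delta>)"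
proof -
  have "uniformly_continuous_on {0..1} \<gamma>"
    using assms(1) unfolding path_def by (intro compact_uniformly_continuous) auto
  then obtain \<eta> where eta: "\<eta> > 0" "\<And>u v. u \<in> {0..1} \<Longrightarrow> v \<in> {0..1} \<Longrightarrow> dist v u < \<eta> \<Longrightarrow> dist (\<gamma> v) (\<gamma> u) < \<delta>"
    using assms(3) unfolding uniformly_continuous_on_def by metis
  obtain M :: nat where M: "1 / \<eta> < M" using reals_Archimedean2 by blast
  have Mpos: "M > 0" using M eta(1) by (metis less_le_not_le of_nat_0_le_iff of_nat_0_less_iff order_less_trans zero_less_divide_1_iff)
  have Meta: "1 / real M < \<eta>" using M eta(1) Mpos by (simp add: field_simps)
  define q where "q i = \<gamma> (real i / M)" for i
  define S where "S j = (\<Sum>i<j. dist (q i) (q (Suc i)))" for j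
  have S0: "S 0 = 0" by (simp add: S_def)
  have Smono: "S i \<le> S j" if "i \<le> j" for i j
    unfolding S_def by (rule sum_mono2) (use that in auto)
  have tri: "dist (q i) (q j) \<le> S j - S i" if "i \<le> j" for i j
    using that
  proof (induction j)
    case 0 then show ?case by (simp add: S_def)
  next
    case (Suc j)
    show ?case
    proof (cases "i = Suc j")
      case True then show ?thesis by simp
    next
      case False
      then have "i \<le> j" using Suc by simp
      then have "dist (q i) (q j) \<le> S j - S i" using Suc by simp
      moreover have "dist (q i) (q (Suc j)) \<le> dist (q i) (q j) + dist (q j) (q (Suc j))"
        by (rule dist_triangle)
      moreover have "S (Suc j) = S j + dist (q j) (q (Suc j))" by (simp add: S_def)
      ultimately show ?thesis by linarith
    qed
  qed
  have step: "S (Suc i) - S i < \<delta>" if "i < M" for i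
  proof -
    have "S (Suc i) - S i = dist (q i) (q (Suc i))" by (simp add: S_def)
    also have "\<dots> < \<delta>" unfolding q_def
    proof (rule eta(2))
      show "real i / M \<in> {0..1}" "real (Suc i) / M \<in> {0..1}" using that Mpos by auto
      have "dist (real i / M) (real (Suc i) / M) = 1 / M" using Mpos
        by (simp add: dist_real_def field_simps)
      then show "dist (real i / M) (real (Suc i) / M) < \<eta>" using Meta by simp
    qed
    finally show ?thesis .
  qed
  have SM: "S M \<le> l"
  proof -
    have "ennreal (S M) \<le> curve_length \<gamma>" unfolding S_def q_def
      by (rule curve_length_ge[where t="\<lambda>i. real i / M"]) (use Mpos in \<open>auto simp: divide_right_mono\<close>)
    then have "ennreal (S M) \<le> ennreal l" using assms(2) by order
    then show ?thesis using assms(4) by (simp add: ennreal_le_iff)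
  qed
  have SM0: "S M \<ge> 0" using Smono[of 0 M] S0 by simp
  define A where "A s = {i. i \<le> M \<and> S i \<le> s * S M}" for s
  define idx where "idx s = Max (A s)" for s
  have Afin: "finite (A s)" for s unfolding A_def by auto
  have A0: "0 \<in> A s" if "s \<ge> 0" for s using that SM0 S0 unfolding A_def by auto
  have idxA: "idx s \<in> A s" if "s \<ge> 0" for s
    unfolding idx_def using Afin A0[OF that] by (intro Max_in) auto
  have idxmax: "i \<le> idx s" if "i \<in> A s" for i s
    unfolding idx_def using Afin that by auto
  define g where "g s = q (idx s)" for s
  have idx1: "idx 1 = M"
    using idxA[of 1] idxmax[of M 1] unfolding A_def by auto
  have g1: "g 1 = \<gamma> 1" unfolding g_def idx1 q_def using Mpos by simp
  have g0: "g 0 = \<gamma> 0"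
  proof -
    have "S (idx 0) \<le> 0" using idxA[of 0] unfolding A_def by auto
    then have "dist (q 0) (q (idx 0)) \<le> 0" using tri[of 0 "idx 0"] S0 by linarith
    then have "q (idx 0) = q 0" by simp
    then show ?thesis unfolding g_def by (simp add: q_def)
  qed
  have gin: "g s \<in> path_image \<gamma>" if "s \<in> {0..1}" for s
  proof -
    have "idx s \<le> M" using idxA[of s] that unfolding A_def by auto
    then have "real (idx s) / M \<in> {0..1}" using Mpos by auto
    then show ?thesis unfolding g_def q_def path_image_def by auto
  qed
  have lip: "dist (g s) (g t) \<le> l * (t - s) + \<delta>" if "s \<in> {0..1}" "t \<in> {0..1}" "s \<le> t" for s t
  proof -
    have iis: "idx s \<le> M" "S (idx s) \<le> s * S M" using idxA[of s] that unfolding A_def by auto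
    have jt: "S (idx t) \<le> t * S M" using idxA[of t] that unfolding A_def by auto
    have "s * S M \<le> t * S M" using that SM0 by (intro mult_right_mono) auto
    then have "idx s \<in> A t" using iis unfolding A_def by auto
    then have ij: "idx s \<le> idx t" by (rule idxmax)
    have "(t - s) * S M \<le> (t - s) * l" using SM that by (intro mult_left_mono) auto
    show ?thesis
    proof (cases "idx s = M")
      case True
      then have "idx t = M" using ij idxA[of t] that unfolding A_def by auto
      then have "g s = g t" using True unfolding g_def by simp
      then show ?thesis using that assms by simp
    next
      case False
      then have lt: "idx s < M" using iis by simp
      have "Suc (idx s) \<notin> A s" using idxmax[of "Suc (idx s)" s] by auto
      then have "S (Suc (idx s)) > s * S M" using lt unfolding A_def by auto
      moreover have "S (Suc (idx s)) - S (idx s) < \<delta>" using step lt by blast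
      moreover have "dist (g s) (g t) \<le> S (idx t) - S (idx s)" unfolding g_def by (rule tri[OF ij])
      ultimately show ?thesis using jt \<open>(t - s) * S M \<le> (t - s) * l\<close>
        by (simp add: algebra_simps)
    qed
  qed
  show ?thesis
  proof (intro exI[of _ g] conjI ballI)
    fix s t :: real assume st: "s \<in> {0..1}" "t \<in> {0..1}"
    show "dist (g s) (g t) \<le> l * \<bar>t - s\<bar> + \<delta>"
    proof (cases "s \<le> t")
      case True then show ?thesis using lip[OF st True] by simp
    next
      case False then show ?thesis using lip[OF st(2) st(1)] by (simp add: dist_commute)
    qed
  qed (use gin g0 g1 in auto)
qed


definition alip :: "'a::metric_space set \<Rightarrow> 'a \<Rightarrow> 'a \<Rightarrow> real \<Rightarrow> bool" where
  "alip X a b L \<longleftrightarrow> a \<in> X \<and> b \<in> X \<and> (\<forall>e>0. \<exists>h. (\<forall>s\<in>{0..1}. h s \<in> X) \<and>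
      dist (h 0) a \<le> e \<and> dist (h 1) b \<le> e \<and>
      (\<forall>s\<in>{0..1}. \<forall>t\<in>{0..1}. dist (h s) (h t) \<le> L * \<bar>t - s\<bar> + e))"

lemma alip_dist:
  assumes "alip X a b L" shows "dist a b \<le> L"
proof (rule field_le_epsilon)
  fix e :: real assume e: "e > 0"
  then have "e/3 > 0" by simp
  then obtain h where h: "dist (h 0) a \<le> e/3" "dist (h 1) b \<le> e/3"
    "\<forall>s\<in>{0..1}. \<forall>t\<in>{0..1}. dist (h s) (h t) \<le> L * \<bar>t - s\<bar> + e/3"
    using assms unfolding alip_def by meson
  have "dist (h 0) (h 1) \<le> L * \<bar>1 - 0\<bar> + e/3" using h(3) by (meson atLeastAtMost_iff order_refl zero_le_one)
  then have h3: "dist (h 0) (h 1) \<le> L + e/3" by simp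
  have "dist a b \<le> dist (h 0) a + dist (h 0) (h 1) + dist (h 1) b" by metric
  then show "dist a b \<le> L + e" using h h3 by simp
qed

lemma alip_split:
  assumes "compact X" "alip X a b L"
  shows "\<exists>z. alip X a z (L/2) \<and> alip X z b (L/2)"
proof -
  have "\<forall>n::nat. \<exists>h. (\<forall>s\<in>{0..1}. h s \<in> X) \<and>
      dist (h 0) a \<le> 1/(real n+1) \<and> dist (h 1) b \<le> 1/(real n+1) \<and>
      (\<forall>s\<in>{0..1}. \<forall>t\<in>{0..1}. dist (h s) (h t) \<le> L * \<bar>t - s\<bar> + 1/(real n+1))"
    using assms(2) unfolding alip_def by auto
  then obtain h where h: "\<And>n s. s \<in> {0..1} \<Longrightarrow> h n s \<in> X"
    "\<And>n. dist (h n 0) a \<le> 1/(real n+1)" "\<And>n. dist (h n 1) b \<le> 1/(real n+1)"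
    "\<And>n s t. s \<in> {0..1} \<Longrightarrow> t \<in> {0..1} \<Longrightarrow> dist (h n s) (h n t) \<le> L * \<bar>t - s\<bar> + 1/(real n+1)"
    by metis
  have "\<forall>n. h n (1/2) \<in> X" using h(1) by auto
  then obtain z r where z: "z \<in> X" "strict_mono r" "((\<lambda>n. h n (1/2)) \<circ> r) \<longlonglongrightarrow> z"
    using compact_imp_seq_compact[OF assms(1)] unfolding seq_compact_def by metis
  have ab: "a \<in> X" "b \<in> X" using assms(2) unfolding alip_def by auto
  have good: "\<exists>n. 1/(real (r n) + 1) \<le> e \<and> dist (h (r n) (1/2)) z \<le> e" if e: "e > 0" for e
  proof -
    have "\<forall>\<^sub>F n in sequentially. dist (h (r n) (1/2)) z < e"
      using z(3) e unfolding o_def by (rule tendstoD)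
    moreover have "\<forall>\<^sub>F n in sequentially. 1 / (real n + 1) < e"
    proof -
      have "\<forall>\<^sub>F n in sequentially. inverse (real (Suc n)) < e"
        using e by (rule order_tendstoD(2)[OF LIMSEQ_inverse_real_of_nat])
      then show ?thesis by (simp add: inverse_eq_divide add.commute)
    qed
    ultimately have "\<forall>\<^sub>F n in sequentially. dist (h (r n) (1/2)) z < e \<and> 1 / (real n + 1) < e"
      by eventually_elim auto
    then obtain n where n: "dist (h (r n) (1/2)) z < e" "1 / (real n + 1) < e"
      unfolding eventually_sequentially by blast
    have "n \<le> r n" using z(2) by (rule strict_mono_imp_increasing)
    then have "1/(real (r n) + 1) \<le> 1 / (real n + 1)" by (intro divide_left_mono) auto
    then show ?thesis using n by (intro exI[of _ n]) auto
  qed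
  have L1: "alip X a z (L/2)" unfolding alip_def
  proof (intro conjI allI impI ab z)
    fix e :: real assume "e > 0"
    then obtain n where n: "1/(real (r n) + 1) \<le> e" "dist (h (r n) (1/2)) z \<le> e" using good by blast
    show "\<exists>h'. (\<forall>s\<in>{0..1}. h' s \<in> X) \<and> dist (h' 0) a \<le> e \<and> dist (h' 1) z \<le> e \<and>
      (\<forall>s\<in>{0..1}. \<forall>t\<in>{0..1}. dist (h' s) (h' t) \<le> L / 2 * \<bar>t - s\<bar> + e)"
    proof (intro exI[of _ "\<lambda>s. h (r n) (s/2)"] conjI ballI)
      fix s t :: real assume st: "s \<in> {0..1}" "t \<in> {0..1}"
      have "dist (h (r n) (s/2)) (h (r n) (t/2)) \<le> L * \<bar>t/2 - s/2\<bar> + 1/(real (r n) + 1)"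
        using st by (intro h(4)) auto
      also have "L * \<bar>t/2 - s/2\<bar> = L/2 * \<bar>t - s\<bar>" by (simp add: abs_if field_simps)
      finally show "dist (h (r n) (s/2)) (h (r n) (t/2)) \<le> L / 2 * \<bar>t - s\<bar> + e" using n by simp
    next
      fix s :: real assume "s \<in> {0..1}" then show "h (r n) (s/2) \<in> X" by (intro h(1)) auto
    qed (use n h(2)[of "r n"] in auto)
  qed
  have L2: "alip X z b (L/2)" unfolding alip_def
  proof (intro conjI allI impI ab z)
    fix e :: real assume "e > 0"
    then obtain n where n: "1/(real (r n) + 1) \<le> e" "dist (h (r n) (1/2)) z \<le> e" using good by blast
    show "\<exists>h'. (\<forall>s\<in>{0..1}. h' s \<in> X) \<and> dist (h' 0) z \<le> e \<and> dist (h' 1) b \<le> e \<and>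
      (\<forall>s\<in>{0..1}. \<forall>t\<in>{0..1}. dist (h' s) (h' t) \<le> L / 2 * \<bar>t - s\<bar> + e)"
    proof (intro exI[of _ "\<lambda>s. h (r n) ((s+1)/2)"] conjI ballI)
      fix s t :: real assume st: "s \<in> {0..1}" "t \<in> {0..1}"
      have "dist (h (r n) ((s+1)/2)) (h (r n) ((t+1)/2)) \<le> L * \<bar>(t+1)/2 - (s+1)/2\<bar> + 1/(real (r n) + 1)"
        using st by (intro h(4)) auto
      also have "L * \<bar>(t+1)/2 - (s+1)/2\<bar> = L/2 * \<bar>t - s\<bar>" by (simp add: abs_if field_simps)
      finally show "dist (h (r n) ((s+1)/2)) (h (r n) ((t+1)/2)) \<le> L / 2 * \<bar>t - s\<bar> + e" using n by simp
    next
      fix s :: real assume "s \<in> {0..1}" then show "h (r n) ((s+1)/2) \<in> X" by (intro h(1)) auto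
    qed (use n h(3)[of "r n"] in auto)
  qed
  show ?thesis using L1 L2 by blast
qed


lemma small_pow:
  assumes "(L::real) \<ge> 0" "e > 0" shows "\<exists>m::nat. L / 2^m < e"
proof -
  obtain m :: nat where "L / e < 2^m" using real_arch_pow[of 2 "L/e"] by auto
  then have "L < e * 2^m" using assms by (simp add: field_simps)
  then show ?thesis by (intro exI[of _ m]) (simp add: field_simps)
qed

lemma idx_props:
  fixes t :: real assumes "t \<in> {0..1}"
  shows "nat \<lfloor>t * 2^m\<rfloor> \<le> 2^m" "real (nat \<lfloor>t * 2^m\<rfloor>) \<le> t * 2^m" "t * 2^m < real (nat \<lfloor>t * 2^m\<rfloor>) + 1"
proof -
  have t: "0 \<le> t" "t \<le> 1" using assms by auto
  have "t * 2^m \<le> 2^m" using t by simp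
  then have "\<lfloor>t * 2^m\<rfloor> \<le> 2^m" by (metis floor_mono floor_numeral_power)
  then show "nat \<lfloor>t * 2^m\<rfloor> \<le> 2^m" by (simp add: nat_le_iff)
  have "0 \<le> t * 2^m" using t by simp
  then show "real (nat \<lfloor>t * 2^m\<rfloor>) \<le> t * 2^m" "t * 2^m < real (nat \<lfloor>t * 2^m\<rfloor>) + 1"
    by linarith+
qed

lemma idx_refine:
  fixes t :: real assumes "t \<in> {0..1}"
  shows "nat \<lfloor>t * 2^m\<rfloor> * 2^n \<le> nat \<lfloor>t * 2^(m+n)\<rfloor>"
    "real (nat \<lfloor>t * 2^(m+n)\<rfloor>) < (real (nat \<lfloor>t * 2^m\<rfloor>) + 1) * 2^n"
proof -
  have e: "t * 2^(m+n) = (t * 2^m) * 2^n" by (simp add: power_add)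
  have "real (nat \<lfloor>t * 2^m\<rfloor> * 2^n) \<le> t * 2^(m+n)"
    using idx_props(2)[OF assms, of m] unfolding e by simp
  then show "nat \<lfloor>t * 2^m\<rfloor> * 2^n \<le> nat \<lfloor>t * 2^(m+n)\<rfloor>" by (rule le_nat_floor)
  have "real (nat \<lfloor>t * 2^(m+n)\<rfloor>) \<le> t * 2^(m+n)" by (rule idx_props(2)[OF assms])
  also have "\<dots> < (real (nat \<lfloor>t * 2^m\<rfloor>) + 1) * 2^n"
    unfolding e using idx_props(3)[OF assms, of m] by (intro mult_strict_right_mono) auto
  finally show "real (nat \<lfloor>t * 2^(m+n)\<rfloor>) < (real (nat \<lfloor>t * 2^m\<rfloor>) + 1) * 2^n" .
qed

lemma dyadic_ext:
  fixes p :: "nat \<Rightarrow> nat \<Rightarrow> 'a::metric_space"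
  assumes X: "compact X" and L: "L \<ge> 0"
   and pX: "\<And>m j. j \<le> 2^m \<Longrightarrow> p m j \<in> X"
   and pref: "\<And>m j. j \<le> 2^m \<Longrightarrow> p (Suc m) (2*j) = p m j"
   and pd: "\<And>m j. j < 2^m \<Longrightarrow> dist (p m j) (p m (Suc j)) \<le> L / 2^m"
   and pa: "\<And>m. p m 0 = a" and pb: "\<And>m. p m (2^m) = b"
  shows "\<exists>F. (\<forall>t\<in>{0..1}. F t \<in> X) \<and> F 0 = a \<and> F 1 = b \<and>
     (\<forall>s\<in>{0..1}. \<forall>t\<in>{0..1}. dist (F s) (F t) \<le> L * \<bar>t - s\<bar>)"
proof -
  have refine: "p (m+n) (j*2^n) = p m j" if "j \<le> 2^m" for m n j
  proof (induction n)
    case 0 then show ?case by simp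
  next
    case (Suc n)
    have "j * 2^n \<le> 2^(m+n)" using that by (simp add: power_add)
    then have "p (Suc (m+n)) (2 * (j*2^n)) = p (m+n) (j*2^n)" by (rule pref)
    then show ?case using Suc by (simp add: mult.commute mult.left_commute)
  qed
  have chain: "dist (p m j) (p m k) \<le> real (k - j) * (L / 2^m)" if "j \<le> k" "k \<le> 2^m" for m j k
    using that
  proof (induction k)
    case 0 then show ?case by simp
  next
    case (Suc k)
    show ?case
    proof (cases "j = Suc k")
      case True then show ?thesis by simp
    next
      case False
      then have jk: "j \<le> k" using Suc by simp
      then have "dist (p m j) (p m k) \<le> real (k - j) * (L / 2^m)" using Suc by simp
      moreover have "dist (p m k) (p m (Suc k)) \<le> L / 2^m" using Suc by (intro pd) auto
      moreover have "dist (p m j) (p m (Suc k)) \<le> dist (p m j) (p m k) + dist (p m k) (p m (Suc k))"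
        by (rule dist_triangle)
      moreover have "real (Suc k - j) * (L / 2^m) = real (k - j) * (L / 2^m) + L / 2^m"
        using jk by (simp add: Suc_diff_le field_simps)
      ultimately show ?thesis by linarith
    qed
  qed
  have chain2: "dist (p m j) (p m k) \<le> \<bar>real k - real j\<bar> * (L / 2^m)" if "j \<le> 2^m" "k \<le> 2^m" for m j k
  proof (cases "j \<le> k")
    case True then show ?thesis using chain[OF True that(2)] by (simp add: of_nat_diff)
  next
    case False then show ?thesis using chain[of k j m] that by (simp add: of_nat_diff dist_commute)
  qed
  define idx where "idx m t = nat \<lfloor>t * 2^m\<rfloor>" for m and t :: real
  define sq where "sq t m = p m (idx m t)" for t m
  have sqX: "sq t m \<in> X" if "t \<in> {0..1}" for t m
    unfolding sq_def idx_def using idx_props(1)[OF that] by (intro pX)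
  have sqd: "dist (sq t m) (sq t (m+n)) \<le> L / 2^m" if t: "t \<in> {0..1}" for t m n
  proof -
    have i1: "idx m t * 2^n \<le> idx (m+n) t" and i2: "real (idx (m+n) t) < (real (idx m t) + 1) * 2^n"
      unfolding idx_def using idx_refine[OF t] by auto
    have "idx m t \<le> 2^m" unfolding idx_def by (rule idx_props(1)[OF t])
    then have "sq t m = p (m+n) (idx m t * 2^n)" unfolding sq_def by (simp add: refine)
    also have "idx (m+n) t \<le> 2^(m+n)" unfolding idx_def by (rule idx_props(1)[OF t])
    then have "dist (p (m+n) (idx m t * 2^n)) (sq t (m+n)) \<le> real (idx (m+n) t - idx m t * 2^n) * (L / 2^(m+n))"
      unfolding sq_def using i1 by (intro chain)
    also have "real (idx (m+n) t - idx m t * 2^n) \<le> 2^n"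
      using i1 i2 by (simp add: of_nat_diff algebra_simps)
    then have "real (idx (m+n) t - idx m t * 2^n) * (L / 2^(m+n)) \<le> 2^n * (L / 2^(m+n))"
      using L by (intro mult_right_mono) auto
    also have "2^n * (L / 2^(m+n)) = L / 2^m" by (simp add: power_add)
    finally show ?thesis .
  qed
  have cauchy: "Cauchy (sq t)" if t: "t \<in> {0..1}" for t
  proof (rule metric_CauchyI)
    fix e :: real assume "e > 0"
    then obtain M where M: "L / 2^M < e/2" using small_pow[OF L, of "e/2"] by auto
    have "dist (sq t m) (sq t n) < e" if "m \<ge> M" "n \<ge> M" for m n
    proof -
      have "dist (sq t M) (sq t m) \<le> L / 2^M" using sqd[OF t, of M "m - M"] that by simp
      moreover have "dist (sq t M) (sq t n) \<le> L / 2^M" using sqd[OF t, of M "n - M"] that by simp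
      moreover have "dist (sq t m) (sq t n) \<le> dist (sq t M) (sq t m) + dist (sq t M) (sq t n)" by metric
      ultimately show ?thesis using M by linarith
    qed
    then show "\<exists>M. \<forall>m\<ge>M. \<forall>n\<ge>M. dist (sq t m) (sq t n) < e" by blast
  qed
  have compl: "complete X" using X by (rule compact_imp_complete)
  define F where "F t = lim (sq t)" for t
  have Flim: "sq t \<longlonglongrightarrow> F t" and FX: "F t \<in> X" if t: "t \<in> {0..1}" for t
  proof -
    obtain l where "l \<in> X" "sq t \<longlonglongrightarrow> l" using compl cauchy[OF t] sqX[OF t] unfolding complete_def by blast
    moreover then have "F t = l" unfolding F_def by (simp add: limI)
    ultimately show "sq t \<longlonglongrightarrow> F t" "F t \<in> X" by auto
  qed
  have Fd: "dist (sq t m) (F t) \<le> L / 2^m" if t: "t \<in> {0..1}" for t m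
  proof -
    have "(\<lambda>n. sq t (n + m)) \<longlonglongrightarrow> F t" using Flim[OF t] by (rule LIMSEQ_ignore_initial_segment)
    then have "(\<lambda>n. dist (sq t m) (sq t (n + m))) \<longlonglongrightarrow> dist (sq t m) (F t)"
      by (intro tendsto_intros)
    then show ?thesis
      by (rule LIMSEQ_le_const2) (use sqd[OF t, of m] in \<open>auto simp: add.commute\<close>)
  qed
  have F0: "F 0 = a"
  proof -
    have "sq 0 = (\<lambda>m. a)" unfolding sq_def idx_def by (auto simp: pa)
    then show ?thesis unfolding F_def by simp
  qed
  have F1: "F 1 = b"
  proof -
    have e: "nat ((2::int) ^ m) = (2::nat) ^ m" for m :: nat by (simp add: nat_power_eq)
    have "sq 1 m = b" for m unfolding sq_def idx_def
      using pb[of m] by (metis e floor_numeral_power mult_1)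
    then have "sq 1 = (\<lambda>m. b)" by auto
    then show ?thesis unfolding F_def by simp
  qed
  have Flip: "dist (F s) (F t) \<le> L * \<bar>t - s\<bar>" if s: "s \<in> {0..1}" and t: "t \<in> {0..1}" for s t
  proof (rule field_le_epsilon)
    fix e :: real assume "e > 0"
    then obtain m where m: "L / 2^m < e/3" using small_pow[OF L, of "e/3"] by auto
    have "dist (F s) (F t) \<le> dist (sq s m) (F s) + dist (sq s m) (sq t m) + dist (sq t m) (F t)" by metric
    moreover have "dist (sq s m) (sq t m) \<le> \<bar>real (idx m t) - real (idx m s)\<bar> * (L / 2^m)"
      unfolding sq_def idx_def using idx_props(1)[OF s] idx_props(1)[OF t] by (intro chain2)
    moreover have "\<bar>real (idx m t) - real (idx m s)\<bar> \<le> \<bar>t - s\<bar> * 2^m + 1"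
    proof -
      have "\<bar>t * 2^m - s * 2^m\<bar> = \<bar>t - s\<bar> * 2^m" by (simp add: abs_mult left_diff_distrib[symmetric])
      then show ?thesis unfolding idx_def using idx_props(2,3)[OF s, of m] idx_props(2,3)[OF t, of m]
        by linarith
    qed
    then have "\<bar>real (idx m t) - real (idx m s)\<bar> * (L / 2^m) \<le> (\<bar>t - s\<bar> * 2^m + 1) * (L / 2^m)"
      using L by (intro mult_right_mono) auto
    moreover have "(\<bar>t - s\<bar> * 2^m + 1) * (L / 2^m) = L * \<bar>t - s\<bar> + L / 2^m"
      by (simp add: field_simps)
    ultimately show "dist (F s) (F t) \<le> L * \<bar>t - s\<bar> + e"
      using Fd[OF s, of m] Fd[OF t, of m] m by linarith
  qed
  show ?thesis using FX F0 F1 Flip by blast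
qed


definition midp :: "'a::metric_space set \<Rightarrow> 'a \<Rightarrow> 'a \<Rightarrow> real \<Rightarrow> 'a" where
  "midp X a b L = (SOME z. alip X a z (L/2) \<and> alip X z b (L/2))"

primrec dyad :: "'a::metric_space set \<Rightarrow> 'a \<Rightarrow> 'a \<Rightarrow> real \<Rightarrow> nat \<Rightarrow> nat \<Rightarrow> 'a" where
  "dyad X a b L 0 = (\<lambda>j. if j = 0 then a else b)"
| "dyad X a b L (Suc m) = (\<lambda>i. if even i then dyad X a b L m (i div 2)
      else midp X (dyad X a b L m (i div 2)) (dyad X a b L m (Suc (i div 2))) (L / 2^m))"

lemma midp_spec:
  assumes "compact X" "alip X a b L"
  shows "alip X a (midp X a b L) (L/2)" "alip X (midp X a b L) b (L/2)"
  using someI_ex[OF alip_split[OF assms]] unfolding midp_def by auto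

lemma dyad_props:
  assumes X: "compact X" and ab: "alip X a b L"
  shows "(\<forall>j<2^m. alip X (dyad X a b L m j) (dyad X a b L m (Suc j)) (L/2^m)) \<and>
         dyad X a b L m 0 = a \<and> dyad X a b L m (2^m) = b"
proof (induction m)
  case 0 then show ?case using ab by simp
next
  case (Suc m)
  let ?d = "dyad X a b L m" and ?d' = "dyad X a b L (Suc m)"
  have IH: "\<And>j. j < 2^m \<Longrightarrow> alip X (?d j) (?d (Suc j)) (L/2^m)" using Suc by blast
  have half: "L / 2^m / 2 = L / 2^Suc m" by simp
  have adj: "alip X (?d' i) (?d' (Suc i)) (L/2^Suc m)" if i: "i < 2^Suc m" for i
  proof (cases "even i")
    case True
    then obtain j where j: "i = 2*j" by blast
    then have jl: "j < 2^m" using i by simp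
    have e1: "?d' i = ?d j" "?d' (Suc i) = midp X (?d j) (?d (Suc j)) (L / 2^m)" using j by auto
    show ?thesis unfolding e1 using midp_spec(1)[OF X IH[OF jl]] half by metis
  next
    case False
    then obtain j where j: "i = 2*j + 1" using oddE by blast
    then have jl: "j < 2^m" using i by simp
    have e1: "?d' i = midp X (?d j) (?d (Suc j)) (L / 2^m)" using j by auto
    have e2: "?d' (Suc i) = ?d (Suc j)" using j by auto
    show ?thesis unfolding e1 e2 using midp_spec(2)[OF X IH[OF jl]] half by metis
  qed
  have "?d' 0 = a" using Suc by simp
  moreover have "?d' (2^Suc m) = b" using Suc by simp
  ultimately show ?case using adj by blast
qed

lemma curve_exists:
  fixes a b :: "'a::metric_space"
  assumes X: "compact X" and ab: "alip X a b L" and L: "L \<ge> 0"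
  shows "\<exists>F. path F \<and> path_image F \<subseteq> X \<and> pathstart F = a \<and> pathfinish F = b \<and> curve_length F \<le> ennreal L"
proof -
  let ?p = "dyad X a b L"
  have P: "\<And>m j. j < 2^m \<Longrightarrow> alip X (?p m j) (?p m (Suc j)) (L/2^m)"
    "\<And>m. ?p m 0 = a" "\<And>m. ?p m (2^m) = b" using dyad_props[OF X ab] by blast+
  have pX: "?p m j \<in> X" if "j \<le> 2^m" for m j
  proof (cases "j = 2^m")
    case True then show ?thesis using P(3) ab unfolding alip_def by auto
  next
    case False then show ?thesis using P(1)[of j m] that unfolding alip_def by auto
  qed
  obtain F where F: "\<forall>t\<in>{0..1}. F t \<in> X" "F 0 = a" "F 1 = b"
    "\<forall>s\<in>{0..1}. \<forall>t\<in>{0..1}. dist (F s) (F t) \<le> L * \<bar>t - s\<bar>"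
  proof -
    have pd: "\<And>m j. j < 2^m \<Longrightarrow> dist (?p m j) (?p m (Suc j)) \<le> L/2^m" using P(1) alip_dist by blast
    have pref: "\<And>m j. j \<le> 2^m \<Longrightarrow> ?p (Suc m) (2*j) = ?p m j" by simp
    show ?thesis using dyadic_ext[OF X L pX pref pd P(2) P(3)] that by blast
  qed
  have lip: "L-lipschitz_on {0..1} F"
    by (rule lipschitz_onI) (use F(4) L in \<open>auto simp: dist_real_def abs_minus_commute\<close>)
  have path: "path F" unfolding path_def by (rule lipschitz_on_continuous_on[OF lip])
  have len: "curve_length F \<le> ennreal L"
    unfolding curve_length_def
  proof (rule SUP_least, clarify)
    fix n and t :: "nat \<Rightarrow> real"
    assume t: "t 0 = 0" "t n = 1" "\<forall>i<n. t i \<le> t (Suc i)"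
    have mono: "t i \<le> t j" if "i \<le> j" "j \<le> n" for i j
      using that
    proof (induction j)
      case 0 then show ?case by simp
    next
      case (Suc j) then show ?case using t(3) by (cases "i = Suc j") (auto intro: order_trans)
    qed
    have tin: "t i \<in> {0..1}" if "i \<le> n" for i
      using mono[of 0 i] mono[of i n] that t by auto
    have "(\<Sum>i<n. dist (F (t i)) (F (t (Suc i)))) \<le> (\<Sum>i<n. L * (t (Suc i) - t i))"
    proof (rule sum_mono)
      fix i assume "i \<in> {..<n}"
      then have "dist (F (t i)) (F (t (Suc i))) \<le> L * \<bar>t (Suc i) - t i\<bar>" using F(4) tin by auto
      then show "dist (F (t i)) (F (t (Suc i))) \<le> L * (t (Suc i) - t i)" using t(3) \<open>i \<in> {..<n}\<close> by auto
    qed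
    also have "\<dots> = L * (t n - t 0)" by (simp add: sum_distrib_left[symmetric] sum_lessThan_telescope)
    also have "\<dots> = L" using t by simp
    finally show "ennreal (\<Sum>i<n. dist (F (t i)) (F (t (Suc i)))) \<le> ennreal L" by (rule ennreal_leI)
  qed
  show ?thesis
    using path len F unfolding path_image_def pathstart_def pathfinish_def by (intro exI[of _ F]) auto
qed


theorem lemma4p6:
  fixes X :: "'a::metric_space set" and Xk :: "nat \<Rightarrow> 'a set" and C :: real
  assumes "compact X"
    and "\<And>k. Xk k \<subseteq> X"
    and "C > 0"
    and "\<And>k. quasiconvex C (Xk k)"
    and "(\<lambda>k. hausdorff_dist (Xk k) X) \<longlonglongrightarrow> 0"
  shows "quasiconvex C X"
  unfolding quasiconvex_def
proof (intro ballI)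
  fix x y assume x: "x \<in> X" and y: "y \<in> X"
  define D where "D = dist x y"
  have near: "\<exists>k. \<exists>x'\<in>Xk k. \<exists>y'\<in>Xk k. dist x x' < d \<and> dist y y' < d" if d: "d > 0" for d
  proof -
    have "\<forall>\<^sub>F k in sequentially. hausdorff_dist (Xk k) X < ennreal d"
      using order_tendstoD(2)[OF assms(5), of "ennreal d"] d by simp
    then obtain k where k: "hausdorff_dist (Xk k) X < ennreal d"
      unfolding eventually_sequentially by blast
    have pt: "\<exists>z\<in>Xk k. dist w z < d" if w: "w \<in> X" for w
    proof -
      have "pt_set_dist w (Xk k) \<le> (SUP y\<in>X. pt_set_dist y (Xk k))" using w by (rule SUP_upper)
      also have "\<dots> \<le> hausdorff_dist (Xk k) X" unfolding hausdorff_dist_def by simp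
      finally have "pt_set_dist w (Xk k) < ennreal d" using k by order
      then obtain z where "z \<in> Xk k" "ennreal (dist w z) < ennreal d"
        unfolding pt_set_dist_def by (auto simp: INF_less_iff)
      then show ?thesis by (auto simp: ennreal_less_iff)
    qed
    show ?thesis using pt[OF x] pt[OF y] by blast
  qed
  have CD: "C * D \<ge> 0" using assms(3) by (simp add: D_def)
  have "alip X x y (C * D)" unfolding alip_def
  proof (intro conjI allI impI x y)
    fix e :: real assume e: "e > 0"
    define d where "d = e / (2*C + 2)"
    have d: "d > 0" "(2*C+1) * d \<le> e" "d \<le> e" using e assms(3) by (auto simp: d_def field_simps)
    obtain k x' y' where xy': "x' \<in> Xk k" "y' \<in> Xk k" "dist x x' < d" "dist y y' < d"
      using near[OF d(1)] by blast
    define l where "l = C * (D + 2*d)"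
    have dxy: "dist x' y' < D + 2*d" unfolding D_def using xy'(3,4) by metric
    have "intrinsic_dist (Xk k) x' y' \<le> ennreal (C * dist x' y')"
      using assms(4)[of k] xy' unfolding quasiconvex_def by blast
    also have "\<dots> < ennreal l" unfolding l_def
      using dxy assms(3) by (subst ennreal_less_iff) auto
    finally obtain \<gamma> where g: "path \<gamma>" "path_image \<gamma> \<subseteq> Xk k" "pathstart \<gamma> = x'" "pathfinish \<gamma> = y'"
      "curve_length \<gamma> < ennreal l"
      unfolding intrinsic_dist_def by (auto simp: INF_less_iff)
    have l0: "l \<ge> 0" unfolding l_def using CD d assms(3) by (simp add: D_def)
    obtain h where h: "\<forall>s\<in>{0..1}. h s \<in> path_image \<gamma>" "h 0 = \<gamma> 0" "h 1 = \<gamma> 1"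
      "\<forall>s\<in>{0..1}. \<forall>t\<in>{0..1}. dist (h s) (h t) \<le> l * \<bar>t - s\<bar> + d"
      using discretize[OF g(1) less_imp_le[OF g(5)] d(1) l0] by blast
    show "\<exists>h. (\<forall>s\<in>{0..1}. h s \<in> X) \<and> dist (h 0) x \<le> e \<and> dist (h 1) y \<le> e \<and>
      (\<forall>s\<in>{0..1}. \<forall>t\<in>{0..1}. dist (h s) (h t) \<le> C * D * \<bar>t - s\<bar> + e)"
    proof (intro exI[of _ h] conjI ballI)
      fix s :: real assume "s \<in> {0..1}" then show "h s \<in> X" using h(1) g(2) assms(2)[of k] by blast
    next
      show "dist (h 0) x \<le> e" using h(2) g(3) xy'(3) d unfolding pathstart_def by (simp add: dist_commute)
    next
      show "dist (h 1) y \<le> e" using h(3) g(4) xy'(4) d unfolding pathfinish_def by (simp add: dist_commute)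
    next
      fix s t :: real assume st: "s \<in> {0..1}" "t \<in> {0..1}"
      have a1: "\<bar>t - s\<bar> \<le> 1" using st by auto
      have "l * \<bar>t - s\<bar> = C * D * \<bar>t - s\<bar> + 2 * C * d * \<bar>t - s\<bar>" unfolding l_def by (simp add: algebra_simps)
      moreover have "2 * C * d * \<bar>t - s\<bar> \<le> 2 * C * d" using a1 assms(3) d(1)
        by (intro mult_left_le) auto
      moreover have "(2*C+1) * d = 2 * C * d + d" by (simp add: algebra_simps)
      moreover have "dist (h s) (h t) \<le> l * \<bar>t - s\<bar> + d" using h(4) st by blast
      ultimately show "dist (h s) (h t) \<le> C * D * \<bar>t - s\<bar> + e" using d(2) by linarith
    qed
  qed
  then obtain F where F: "path F" "path_image F \<subseteq> X" "pathstart F = x" "pathfinish F = y"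
    "curve_length F \<le> ennreal (C * D)"
    using curve_exists[OF assms(1) _ CD] by blast
  have "intrinsic_dist X x y \<le> curve_length F"
    unfolding intrinsic_dist_def using F by (intro INF_lower) auto
  then show "intrinsic_dist X x y \<le> ennreal (C * dist x y)" using F(5) unfolding D_def by order
qed

end
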